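(* For every $\mathcal W\in{\rm Gr}^{(0)}_+$ one has $\mathcal A_{\mathcal W}\cap\mathcal D_-=\{0\}$: the only Kac–Schwarz operator of $\mathcal W$ lying in $\mathcal D_-$ is $0$.
   Context: $H_+=\mathbb C[z]$, $H_-=z^{-1}\mathbb C[[z^{-1}]]$, $H=H_+\oplus H_-$. ${\rm Gr}^{(0)}_+$ is the set of closed subspaces $\mathcal W\subset H$ with $\pi_+:\mathcal W\to H_+$ (projection along $H_-$) an isomorphism. $\mathcal D=\mathbb C((z^{-1}))[[\partial_z]]$ is the ring of differential operators $\sum_{m\ge0}a_m(z)\partial_z^m$, $a_m\in H$, acting on $H$; $\mathcal D_\pm=H_\pm[[\partial_z]]$. The Kac–Schwarz algebra of $\mathcal W$ is $\mathcal A_{\mathcal W}=\{\mathtt A\in\mathcal D:\mathtt A\cdot\mathcal W\subset\mathcal W\}$. *)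

theory Defs
  imports Complex_Main
begin

text \<open>Elements of H = C((z^-1)) are coefficient functions int => complex
  (coefficient of z^n) with support bounded above.\<close>
type_synonym Hel = "int \<Rightarrow> complex"

definition inH :: "Hel \<Rightarrow> bool" where
  "inH f \<longleftrightarrow> (\<exists>N. \<forall>n>N. f n = 0)"

definition Hplus :: "Hel set" where
  "Hplus = {f. inH f \<and> (\<forall>n<0. f n = 0)}"

definition Hminus :: "Hel set" where
  "Hminus = {f. \<forall>n\<ge>0. f n = 0}"

definition pi_plus :: "Hel \<Rightarrow> Hel" where
  "pi_plus f = (\<lambda>n. if n \<ge> 0 then f n else 0)"

definition is_subspace :: "Hel set \<Rightarrow> bool" where
  "is_subspace W \<longleftrightarrow> W \<subseteq> Collect inH \<and> (\<lambda>_. 0) \<in> W \<and>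
     (\<forall>f\<in>W. \<forall>g\<in>W. (\<lambda>n. f n + g n) \<in> W) \<and>
     (\<forall>c. \<forall>f\<in>W. (\<lambda>n. c * f n) \<in> W)"

text \<open>Convergence in the z^{-1}-adic topology of H: eventually all coefficients
  of index >= -N agree, for every N.\<close>
definition zconv :: "(nat \<Rightarrow> Hel) \<Rightarrow> Hel \<Rightarrow> bool" where
  "zconv s f \<longleftrightarrow> (\<forall>N::int. \<exists>K. \<forall>k\<ge>K. \<forall>n\<ge>-N. s k n = f n)"

definition closedH :: "Hel set \<Rightarrow> bool" where
  "closedH W \<longleftrightarrow> (\<forall>s f. (\<forall>k. s k \<in> W) \<and> inH f \<and> zconv s f \<longrightarrow> f \<in> W)"

definition Gr0plus :: "Hel set set" where
  "Gr0plus = {W. is_subspace W \<and> closedH W \<and> bij_betw pi_plus W Hplus}"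

text \<open>Differential operators sum_m a_m(z) d^m, represented by m |-> a_m.\<close>
type_synonym Dop = "nat \<Rightarrow> Hel"

definition Dall :: "Dop set" where
  "Dall = {A. \<forall>m. inH (A m)}"

definition Dminus :: "Dop set" where
  "Dminus = {A. \<forall>m. A m \<in> Hminus}"

definition dz :: "Hel \<Rightarrow> Hel" where
  "dz f = (\<lambda>n. of_int (n + 1) * f (n + 1))"

definition hmult :: "Hel \<Rightarrow> Hel \<Rightarrow> Hel" where
  "hmult a g = (\<lambda>n. \<Sum>k\<in>{k. a k \<noteq> 0 \<and> g (n - k) \<noteq> 0}. a k * g (n - k))"

definition op_term :: "Dop \<Rightarrow> Hel \<Rightarrow> nat \<Rightarrow> int \<Rightarrow> complex" where
  "op_term A f m n = hmult (A m) ((dz ^^ m) f) n"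

text \<open>The action A.f is defined when each coefficient is a finite sum.\<close>
definition acts :: "Dop \<Rightarrow> Hel \<Rightarrow> bool" where
  "acts A f \<longleftrightarrow> (\<forall>n. finite {m. op_term A f m n \<noteq> 0})"

definition op_apply :: "Dop \<Rightarrow> Hel \<Rightarrow> Hel" where
  "op_apply A f = (\<lambda>n. \<Sum>m\<in>{m. op_term A f m n \<noteq> 0}. op_term A f m n)"

definition KS_algebra :: "Hel set \<Rightarrow> Dop set" where
  "KS_algebra W = {A \<in> Dall. \<forall>f\<in>W. acts A f \<and> op_apply A f \<in> W}"

end

theory Submission
  imports Defs
begin

lemma int_max_exists:
  fixes V :: "int set"
  assumes "V \<noteq> {}" "\<And>v. v \<in> V \<Longrightarrow> v \<le> b"
  shows "\<exists>s\<in>V. \<forall>v\<in>V. v \<le> s"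
proof -
  have bdd: "bdd_above V" using assms(2) by (auto simp: bdd_above_def)
  have le: "\<forall>v\<in>V. v \<le> Sup V" using bdd by (auto intro: cSup_upper)
  have "Sup V \<in> V"
  proof (rule ccontr)
    assume "Sup V \<notin> V"
    then have "\<And>v. v \<in> V \<Longrightarrow> v \<le> Sup V - 1"
      using le by (metis add_le_cancel_right diff_add_cancel order_le_less zle_add1_eq_le)
    then have "Sup V \<le> Sup V - 1" using assms(1) by (intro cSup_least) auto
    then show False by simp
  qed
  then show ?thesis using le by blast
qed

lemma dz_pow: "(dz ^^ m) f j = (\<Prod>i<m. of_int (j + 1 + int i)) * f (j + int m)"
proof (induction m arbitrary: j)
  case 0
  then show ?case by simp
next
  case (Suc m)
  have "(dz ^^ Suc m) f j = dz ((dz ^^ m) f) j" by simp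
  also have "\<dots> = of_int (j+1) * ((dz ^^ m) f) (j+1)" by (simp add: dz_def)
  also have "\<dots> = of_int (j+1) * ((\<Prod>i<m. of_int (j + 1 + 1 + int i)) * f (j + 1 + int m))"
    using Suc by simp
  also have "\<dots> = (\<Prod>i<Suc m. of_int (j + 1 + int i)) * f (j + int (Suc m))"
  proof -
    have "(\<Prod>i<Suc m. (of_int (j + 1 + int i)::complex)) = of_int (j + 1 + int 0) * (\<Prod>i<m. of_int (j + 1 + int (Suc i)))"
      by (rule prod.lessThan_Suc_shift)
    also have "(\<Prod>i<m. (of_int (j + 1 + int (Suc i))::complex)) = (\<Prod>i<m. of_int (j + 1 + 1 + int i))"
      by (intro prod.cong) auto
    finally show ?thesis by (simp add: add.assoc)
  qed
  finally show ?case .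
qed

lemma zero_in_KS:
  assumes "W \<in> Gr0plus"
  shows "(\<lambda>_ _. 0) \<in> KS_algebra W \<inter> Dminus"
proof -
  have sub: "is_subspace W" using assms by (simp add: Gr0plus_def)
  have ot: "op_term (\<lambda>_ _. 0) f m n = 0" for f m n
    by (simp add: op_term_def hmult_def)
  have oa: "op_apply (\<lambda>_ _. 0) f = (\<lambda>_. 0)" for f
    by (simp add: op_apply_def ot)
  show ?thesis using sub
    by (auto simp: KS_algebra_def Dall_def Dminus_def Hminus_def inH_def acts_def ot oa
        is_subspace_def)
qed

theorem mainTheorem3:
  assumes "W \<in> Gr0plus"
  shows "KS_algebra W \<inter> Dminus = {(\<lambda>_ _. 0)}"
proof (rule ccontr)
  assume "\<not> ?thesis"
  with zero_in_KS[OF assms] obtain A where AK: "A \<in> KS_algebra W" and AD: "A \<in> Dminus"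
    and Anz: "A \<noteq> (\<lambda>_ _. 0)" by blast
  have sub: "is_subspace W" and bij: "bij_betw pi_plus W Hplus"
    using assms by (auto simp: Gr0plus_def)
  have Aneg: "A m k = 0" if "k \<ge> 0" for m k
    using AD that by (auto simp: Dminus_def Hminus_def)
  define V where "V = {k - int m | m k. A m k \<noteq> 0}"
  have "V \<noteq> {}"
  proof -
    from Anz obtain m k where "A m k \<noteq> 0" by (meson ext)
    then show ?thesis unfolding V_def by blast
  qed
  moreover have Vb: "\<And>v. v \<in> V \<Longrightarrow> v \<le> -1"
  proof -
    fix v assume "v \<in> V"
    then obtain m k where "v = k - int m" "A m k \<noteq> 0" unfolding V_def by blast
    then show "v \<le> -1" using Aneg[of k m] by linarith
  qed
  ultimately obtain s where sV: "s \<in> V" and smax: "\<forall>v\<in>V. v \<le> s"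
    using int_max_exists by blast
  have sle: "k - int m \<le> s" if "A m k \<noteq> 0" for m k
    using smax that unfolding V_def by blast
  have sneg: "s \<le> -1" using sV Vb by blast
  have basis: "\<exists>w\<in>W. pi_plus w = (\<lambda>i. if i = int n then 1 else 0)" for n :: nat
  proof -
    have "(\<lambda>i. if i = int n then 1 else 0) \<in> Hplus"
      by (auto simp: Hplus_def inH_def intro!: exI[of _ "int n"])
    then show ?thesis using bij unfolding bij_betw_def by (metis imageE)
  qed
  have inj: "inj_on pi_plus W" using bij by (simp add: bij_betw_def)
  have zW: "(\<lambda>_. 0) \<in> W" using sub by (simp add: is_subspace_def)
  have key: "(\<Sum>m\<le>n. A m (int m + s) * (\<Prod>i<m. of_int (int n - int m + 1 + int i))) = 0"
    if ns: "int n + s < 0" for n :: nat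
  proof -
    obtain w where wW: "w \<in> W" and pw: "pi_plus w = (\<lambda>i. if i = int n then 1 else 0)"
      using basis by blast
    have wbig: "w i = 0" if "i > int n" for i
    proof -
      have "pi_plus w i = 0" using pw that by simp
      then show ?thesis using that by (simp add: pi_plus_def split: if_splits)
    qed
    have wn: "w (int n) = 1"
    proof -
      have "pi_plus w (int n) = 1" using pw by simp
      then show ?thesis by (simp add: pi_plus_def)
    qed
    have gz: "(dz ^^ m) w j = 0" if "j + int m > int n" for m j
      using wbig that by (simp add: dz_pow)
    have ot_big: "op_term A w m d = 0" if "d > int n + s" for m d
    proof -
      have "{k. A m k \<noteq> 0 \<and> (dz ^^ m) w (d - k) \<noteq> 0} = {}"
      proof (safe)
        fix k assume a: "A m k \<noteq> 0" "(dz ^^ m) w (d - k) \<noteq> 0"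
        have "k - int m \<le> s" using sle a by blast
        then have "d - k + int m > int n" using that by linarith
        then show "k \<in> {}" using gz a by blast
      qed
      then show ?thesis unfolding op_term_def hmult_def by (metis (no_types, lifting) sum.empty)
    qed
    have oa_big: "op_apply A w d = 0" if "d > int n + s" for d
      using ot_big[OF that] by (simp add: op_apply_def)
    have AwW: "op_apply A w \<in> W" using AK wW by (auto simp: KS_algebra_def)
    have "pi_plus (op_apply A w) = pi_plus (\<lambda>_. 0)"
      using oa_big ns by (auto simp: pi_plus_def)
    then have Aw0: "op_apply A w = (\<lambda>_. 0)" using inj AwW zW by (meson inj_onD)
    have ot_eq: "op_term A w m (int n + s) = A m (int m + s) * (dz ^^ m) w (int n - int m)" for m
    proof -
      let ?S = "{k. A m k \<noteq> 0 \<and> (dz ^^ m) w (int n + s - k) \<noteq> 0}"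
      have Ssub: "?S \<subseteq> {int m + s}"
      proof
        fix k assume a: "k \<in> ?S"
        have "k - int m \<le> s" using sle a by blast
        moreover have "\<not> (int n + s - k + int m > int n)" using gz a by blast
        ultimately show "k \<in> {int m + s}" by simp
      qed
      have "hmult (A m) ((dz ^^ m) w) (int n + s) = (\<Sum>k\<in>?S. A m k * (dz ^^ m) w (int n + s - k))"
        by (simp add: hmult_def)
      also have "\<dots> = (\<Sum>k\<in>{int m + s}. A m k * (dz ^^ m) w (int n + s - k))"
        using Ssub by (intro sum.mono_neutral_left) auto
      also have "\<dots> = A m (int m + s) * (dz ^^ m) w (int n - int m)" by simp
      finally show ?thesis by (simp add: op_term_def)
    qed
    have ot_val: "op_term A w m (int n + s) = A m (int m + s) * (\<Prod>i<m. of_int (int n - int m + 1 + int i))" for m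
      using ot_eq[of m] wn by (simp add: dz_pow)
    have ot_hi: "op_term A w m (int n + s) = 0" if "m > n" for m
    proof -
      have "(\<Prod>i<m. (of_int (int n - int m + 1 + int i) :: complex)) = 0"
      proof (rule prod_zero)
        show "\<exists>a\<in>{..<m}. (of_int (int n - int m + 1 + int a)::complex) = 0"
          using that by (intro bexI[of _ "m - n - 1"]) auto
      qed auto
      then show ?thesis using ot_val by simp
    qed
    have "0 = op_apply A w (int n + s)" using Aw0 by simp
    also have "\<dots> = (\<Sum>m\<in>{m. op_term A w m (int n + s) \<noteq> 0}. op_term A w m (int n + s))"
      by (simp add: op_apply_def)
    also have "\<dots> = (\<Sum>m\<le>n. op_term A w m (int n + s))"
    proof (rule sum.mono_neutral_left)
      show "{m. op_term A w m (int n + s) \<noteq> 0} \<subseteq> {..n}"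
        using ot_hi by (auto simp: not_le[symmetric])
    qed auto
    finally show ?thesis using ot_val by simp
  qed
  have zero: "A n (int n + s) = 0" if "int n + s < 0" for n :: nat
    using that
  proof (induction n rule: less_induct)
    case (less n)
    have "(\<Sum>m\<le>n. A m (int m + s) * (\<Prod>i<m. of_int (int n - int m + 1 + int i))) =
          (\<Sum>m\<in>{n}. A m (int m + s) * (\<Prod>i<m. (of_int (int n - int m + 1 + int i)::complex)))"
    proof (rule sum.mono_neutral_right)
      show "\<forall>m\<in>{..n} - {n}. A m (int m + s) * (\<Prod>i<m. (of_int (int n - int m + 1 + int i)::complex)) = 0"
        using less.IH less.prems by auto
    qed auto
    then have "A n (int n + s) * (\<Prod>i<n. (of_int (1 + int i)::complex)) = 0"
      using key[OF less.prems] by simp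
    moreover have "(\<Prod>i<n. (of_int (1 + int i)::complex)) \<noteq> 0"
    proof (subst prod_zero_iff)
      show "\<not> (\<exists>a\<in>{..<n}. (of_int (1 + int a)::complex) = 0)"
      proof
        assume "\<exists>a\<in>{..<n}. (of_int (1 + int a)::complex) = 0"
        then obtain a where "(of_int (1 + int a)::complex) = 0" by blast
        then have "1 + int a = 0" using of_int_eq_0_iff by blast
        then show False by simp
      qed
    qed auto
    ultimately show ?case by simp
  qed
  from sV obtain m k where mk: "s = k - int m" "A m k \<noteq> 0" unfolding V_def by blast
  have "k < 0" using mk(2) Aneg[of k m] by linarith
  then have "int m + s < 0" using mk by simp
  then have "A m (int m + s) = 0" by (rule zero)
  then show False using mk by simp
qed

end
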